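(* For every $n$ that is a power of a prime, there exists a split graph $G_n$ with $2(n^2+n+1)$ vertices such that every fractional $2$-guidance system and every weak $2$-guidance system of $G_n$ has maximum outdegree at least $(n+1)/2$.
   Context: All graphs are finite, simple and undirected. A split graph is a graph whose vertex set can be partitioned into a clique and an independent set. For $u,v$ at distance $\ell$, $\Gamma_G(u,v)$ is the set of neighbors of $u$ at distance $\ell-1$ from $v$. A partial orientation of $G$ is a directed graph $\vec{H}$ on $V(G)$ with every $(u,v)\in E(\vec{H})$ satisfying $uv\in E(G)$. $B_{\vec{H}}(v,a)$ is the set of vertices reachable from $v$ by a directed path of length at most $a$. A weak $r$-guidance system is a partial orientation $\vec{H}$ such that for any distinct $u,v$ at distance $\ell\le r$ there exist non-negative integers $a,b$ with $a+b=\ell-1$ such that $G$ has an edge between $B_{\vec{H}}(u,a)$ and $B_{\vec{H}}(v,b)$. A fractional orientation assigns a non-negative real $p(u,v)$ to each ordered pair of adjacent vertices; its maximum outdegree is $\max_u\sum_{v:uv\in E(G)}p(u,v)$. A fractional $r$-guidance system is a fractional orientation with $\sum_{y\in\Gamma_G(u,v)}p(u,y)+\sum_{y\in\Gamma_G(v,u)}p(v,y)\ge1$ for all $u,v$ at distance between $2$ and $r$. *)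

theory Defs
  imports Complex_Main "HOL-Computational_Algebra.Primes"
begin

definition graph :: "'a set \<Rightarrow> ('a \<Rightarrow> 'a \<Rightarrow> bool) \<Rightarrow> bool" where
  "graph V E \<longleftrightarrow> finite V \<and> (\<forall>x y. E x y \<longrightarrow> x \<in> V \<and> y \<in> V)
     \<and> (\<forall>x y. E x y \<longrightarrow> E y x) \<and> (\<forall>x. \<not> E x x)"

definition split_graph :: "'a set \<Rightarrow> ('a \<Rightarrow> 'a \<Rightarrow> bool) \<Rightarrow> bool" where
  "split_graph V E \<longleftrightarrow> (\<exists>K I. K \<union> I = V \<and> K \<inter> I = {}
     \<and> (\<forall>x\<in>K. \<forall>y\<in>K. x \<noteq> y \<longrightarrow> E x y)
     \<and> (\<forall>x\<in>I. \<forall>y\<in>I. \<not> E x y))"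

fun walk :: "('a \<Rightarrow> 'a \<Rightarrow> bool) \<Rightarrow> nat \<Rightarrow> 'a \<Rightarrow> 'a \<Rightarrow> bool" where
  "walk R 0 u v = (u = v)"
| "walk R (Suc k) u v = (\<exists>w. R u w \<and> walk R k w v)"

definition at_dist :: "('a \<Rightarrow> 'a \<Rightarrow> bool) \<Rightarrow> 'a \<Rightarrow> 'a \<Rightarrow> nat \<Rightarrow> bool" where
  "at_dist E u v l \<longleftrightarrow> walk E l u v \<and> (\<forall>k<l. \<not> walk E k u v)"

definition Gamma :: "('a \<Rightarrow> 'a \<Rightarrow> bool) \<Rightarrow> 'a \<Rightarrow> 'a \<Rightarrow> 'a set" where
  "Gamma E u v = {y. E u y \<and> (\<exists>l. at_dist E u v l \<and> at_dist E y v (l - 1))}"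

definition partial_orientation :: "('a \<Rightarrow> 'a \<Rightarrow> bool) \<Rightarrow> ('a \<Rightarrow> 'a \<Rightarrow> bool) \<Rightarrow> bool" where
  "partial_orientation E H \<longleftrightarrow> (\<forall>u v. H u v \<longrightarrow> E u v)"

definition dball :: "('a \<Rightarrow> 'a \<Rightarrow> bool) \<Rightarrow> 'a \<Rightarrow> nat \<Rightarrow> 'a set" where
  "dball H v a = {w. \<exists>k\<le>a. walk H k v w}"

definition weak_guidance :: "'a set \<Rightarrow> ('a \<Rightarrow> 'a \<Rightarrow> bool) \<Rightarrow> nat \<Rightarrow> ('a \<Rightarrow> 'a \<Rightarrow> bool) \<Rightarrow> bool" where
  "weak_guidance V E r H \<longleftrightarrow> partial_orientation E H \<and>
     (\<forall>u\<in>V. \<forall>v\<in>V. \<forall>l. u \<noteq> v \<and> at_dist E u v l \<and> l \<le> r \<longrightarrow>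
        (\<exists>a b. a + b = l - 1 \<and> (\<exists>x\<in>dball H u a. \<exists>y\<in>dball H v b. E x y)))"

definition max_outdeg :: "'a set \<Rightarrow> ('a \<Rightarrow> 'a \<Rightarrow> bool) \<Rightarrow> nat" where
  "max_outdeg V H = Max ((\<lambda>u. card {v. H u v}) ` V)"

definition fractional_orientation :: "('a \<Rightarrow> 'a \<Rightarrow> bool) \<Rightarrow> ('a \<Rightarrow> 'a \<Rightarrow> real) \<Rightarrow> bool" where
  "fractional_orientation E p \<longleftrightarrow> (\<forall>u v. E u v \<longrightarrow> p u v \<ge> 0)"

definition frac_max_outdeg :: "'a set \<Rightarrow> ('a \<Rightarrow> 'a \<Rightarrow> bool) \<Rightarrow> ('a \<Rightarrow> 'a \<Rightarrow> real) \<Rightarrow> real" where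
  "frac_max_outdeg V E p = Max ((\<lambda>u. \<Sum>v\<in>{v. E u v}. p u v) ` V)"

definition frac_guidance :: "'a set \<Rightarrow> ('a \<Rightarrow> 'a \<Rightarrow> bool) \<Rightarrow> nat \<Rightarrow> ('a \<Rightarrow> 'a \<Rightarrow> real) \<Rightarrow> bool" where
  "frac_guidance V E r p \<longleftrightarrow> fractional_orientation E p \<and>
     (\<forall>u\<in>V. \<forall>v\<in>V. \<forall>l. at_dist E u v l \<and> 2 \<le> l \<and> l \<le> r \<longrightarrow>
        (\<Sum>y\<in>Gamma E u v. p u y) + (\<Sum>y\<in>Gamma E v u. p v y) \<ge> 1)"

end

theory Submission imports Defs begin

fun tri :: "nat \<Rightarrow> nat" where
  "tri 0 = 0" | "tri (Suc b) = tri b + b"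

definition pcode :: "nat \<Rightarrow> nat \<Rightarrow> nat" where
  "pcode i j = (if i < j then tri j + i else tri i + j)"

definition inc :: "nat \<Rightarrow> nat \<Rightarrow> nat \<Rightarrow> nat \<Rightarrow> bool" where
  "inc m N x y = (x < m \<and> (\<exists>j<m. j \<noteq> x \<and> y = N + pcode x j))"

definition GE :: "nat \<Rightarrow> nat \<Rightarrow> nat \<Rightarrow> nat \<Rightarrow> bool" where
  "GE m N x y = ((N \<le> x \<and> x < 2*N \<and> N \<le> y \<and> y < 2*N \<and> x \<noteq> y) \<or> inc m N x y \<or> inc m N y x)"

lemma tri_mono: "a < b \<Longrightarrow> tri a + a \<le> tri b"
proof (induction b)
  case 0 then show ?case by simp
next
  case (Suc b)
  then show ?case by (cases "a < b") (auto simp: less_Suc_eq)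
qed

lemma tri_le: "a \<le> b \<Longrightarrow> tri a \<le> tri b"
  using tri_mono[of a b] by (cases "a = b") auto

lemma tri_2: "2 * tri k = k * (k - 1)"
proof (induction k)
  case 0 then show ?case by simp
next
  case (Suc k) then show ?case by (cases k) (auto simp: algebra_simps)
qed

lemma tri_inj_aux:
  assumes "x < y" "x' < y'" "tri y + x = tri y' + x'"
  shows "y = y' \<and> x = x'"
proof -
  have "\<not> y < y'"
  proof
    assume "y < y'" then have "tri y + y \<le> tri y'" by (rule tri_mono)
    then show False using assms by linarith
  qed
  moreover have "\<not> y' < y"
  proof
    assume "y' < y" then have "tri y' + y' \<le> tri y" by (rule tri_mono)
    then show False using assms by linarith
  qed
  ultimately show ?thesis using assms by auto
qed

lemma pcode_sym: "pcode a b = pcode b a"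
  unfolding pcode_def by auto

lemma pcode_inj:
  assumes "a \<noteq> b" "c \<noteq> d" "pcode a b = pcode c d"
  shows "(a = c \<and> b = d) \<or> (a = d \<and> b = c)"
proof -
  have p: "pcode x y = tri (max x y) + min x y" for x y
    unfolding pcode_def by (auto simp: min_def max_def)
  have "min a b < max a b" "min c d < max c d" using assms(1,2) by auto
  then have "max a b = max c d \<and> min a b = min c d"
    using tri_inj_aux assms(3) unfolding p by blast
  then show ?thesis by (auto simp: min_def max_def split: if_splits)
qed

lemma pcode_bound:
  assumes "a < m" "b < m" "a \<noteq> b"
  shows "pcode a b < tri m"
proof -
  have "tri y + x < tri m" if "x < y" "y < m" for x y
  proof -
    have "tri (Suc y) \<le> tri m" using that by (intro tri_le) auto
    then show ?thesis using that by simp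
  qed
  then show ?thesis using assms unfolding pcode_def by (cases "a < b") auto
qed

locale gsetup =
  fixes m N :: nat
  assumes m2: "2 \<le> m" and mN: "m \<le> N" and tN: "tri m \<le> N"
begin

abbreviation "E \<equiv> GE m N"

lemma Esym: "E x y = E y x"
  unfolding GE_def by auto

lemma nbr:
  assumes "i < m" "E i y"
  shows "\<exists>k<m. k \<noteq> i \<and> y = N + pcode i k"
  using assms mN unfolding GE_def inc_def by auto

lemma common:
  assumes "i < m" "j < m" "i \<noteq> j" "E i y" "E j y"
  shows "y = N + pcode i j"
proof -
  obtain k where k: "k < m" "k \<noteq> i" "y = N + pcode i k" using nbr assms by blast
  obtain k' where k': "k' < m" "k' \<noteq> j" "y = N + pcode j k'" using nbr assms by blast
  have "pcode i k = pcode j k'" using k k' by simp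
  then have "(i = j \<and> k = k') \<or> (i = k' \<and> k = j)" using pcode_inj k k' by metis
  then show ?thesis using assms k by auto
qed

lemma adj1:
  assumes "i < m" "j < m" "i \<noteq> j"
  shows "E i (N + pcode i j)"
  using assms unfolding GE_def inc_def by auto

lemma adj2:
  assumes "i < m" "j < m" "i \<noteq> j"
  shows "E (N + pcode i j) j"
  using assms unfolding GE_def inc_def by (auto simp: pcode_sym)

lemma nonadj:
  assumes "i < m" "j < m"
  shows "\<not> E i j"
  using assms mN unfolding GE_def inc_def by auto

lemma walk1: "walk R (Suc 0) u v = R u v"
  by simp

lemma dist2:
  assumes "i < m" "j < m" "i \<noteq> j"
  shows "at_dist E i j 2"
proof -
  have "walk E 2 i j" using adj1[OF assms] adj2[OF assms]
    by (auto simp: numeral_2_eq_2)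
  moreover have "\<not> walk E k i j" if "k < 2" for k
  proof -
    have "k = 0 \<or> k = Suc 0" using that by auto
    then show ?thesis using assms nonadj[of i j] by auto
  qed
  ultimately show ?thesis unfolding at_dist_def by auto
qed

lemma at_dist_unique:
  assumes "at_dist R u v l" "at_dist R u v l'"
  shows "l = l'"
  using assms unfolding at_dist_def by (metis linorder_neqE_nat)

lemma Gamma_sub:
  assumes "i < m" "j < m" "i \<noteq> j"
  shows "Gamma E i j \<subseteq> {N + pcode i j}"
proof
  fix y assume "y \<in> Gamma E i j"
  then obtain l where y: "E i y" "at_dist E i j l" "at_dist E y j (l - 1)"
    unfolding Gamma_def by auto
  have "l = 2" using at_dist_unique[OF y(2) dist2[OF assms]] .
  then have "walk E (Suc 0) y j" using y(3) unfolding at_dist_def by simp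
  then have "E j y" using Esym by simp
  then show "y \<in> {N + pcode i j}" using common[OF assms y(1)] by simp
qed

end

lemma sum_minus_swap:
  fixes f :: "nat \<Rightarrow> nat \<Rightarrow> real"
  assumes "finite A"
  shows "(\<Sum>i\<in>A. \<Sum>k\<in>A-{i}. f k i) = (\<Sum>i\<in>A. \<Sum>k\<in>A-{i}. f i k)"
proof -
  have eq: "(\<Sum>k\<in>A-{i}. g k) = (\<Sum>k\<in>A. if k = i then 0 else g k)" for i and g :: "nat \<Rightarrow> real"
    using assms by (simp add: sum.If_cases Diff_eq Int_commute)
  show ?thesis
    unfolding eq by (subst sum.swap) (intro sum.cong refl, auto)
qed

lemma avg:
  fixes f :: "nat \<Rightarrow> nat \<Rightarrow> real"
  assumes "finite A" "A \<noteq> {}" "\<And>i k. i\<in>A \<Longrightarrow> k\<in>A \<Longrightarrow> i\<noteq>k \<Longrightarrow> f i k + f k i \<ge> 1"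
  shows "\<exists>i\<in>A. (\<Sum>k\<in>A-{i}. f i k) \<ge> (real (card A) - 1) / 2"
proof (rule ccontr)
  assume "\<not> ?thesis"
  then have lt: "\<And>i. i \<in> A \<Longrightarrow> (\<Sum>k\<in>A-{i}. f i k) < (real (card A) - 1) / 2" by auto
  have "(\<Sum>i\<in>A. \<Sum>k\<in>A-{i}. f i k) < (\<Sum>i\<in>A. (real (card A) - 1) / 2)"
    using assms(1,2) lt by (intro sum_strict_mono) auto
  also have "\<dots> = real (card A) * (real (card A) - 1) / 2" by simp
  finally have a: "(\<Sum>i\<in>A. \<Sum>k\<in>A-{i}. f i k) < real (card A) * (real (card A) - 1) / 2" .
  have "(\<Sum>i\<in>A. \<Sum>k\<in>A-{i}. (1::real)) \<le> (\<Sum>i\<in>A. \<Sum>k\<in>A-{i}. f i k + f k i)"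
    using assms by (intro sum_mono) auto
  also have "\<dots> = 2 * (\<Sum>i\<in>A. \<Sum>k\<in>A-{i}. f i k)"
    using sum_minus_swap[OF assms(1), of f] by (simp add: sum.distrib)
  finally have b: "(\<Sum>i\<in>A. \<Sum>k\<in>A-{i}. (1::real)) \<le> 2 * (\<Sum>i\<in>A. \<Sum>k\<in>A-{i}. f i k)" .
  have "(\<Sum>i\<in>A. \<Sum>k\<in>A-{i}. (1::real)) = real (card A) * (real (card A) - 1)"
  proof -
    have "card A \<ge> 1" using assms(1,2) by (simp add: Suc_leI card_gt_0_iff)
    then show ?thesis using assms(1) by (simp add: card_Diff_singleton of_nat_diff)
  qed
  then show False using a b by linarith
qed


context gsetup
begin

abbreviation "VV \<equiv> {0..<2*N}"

lemma is_graph: "graph VV E"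
  unfolding graph_def
proof (intro conjI allI impI)
  fix x y assume "E x y"
  then have "x < 2*N \<and> y < 2*N"
    using mN tN pcode_bound[of _ m] unfolding GE_def inc_def
    by (auto, (fastforce)+)
  then show "x \<in> VV" "y \<in> VV" by auto
next
  fix x y assume "E x y" then show "E y x" using Esym by simp
next
  fix x show "\<not> E x x" using mN unfolding GE_def inc_def by auto
qed simp

lemma is_split: "split_graph VV E"
  unfolding split_graph_def
  by (rule exI[of _ "{N..<2*N}"], rule exI[of _ "{0..<N}"])
     (auto simp: GE_def inc_def)

lemma out_set:
  assumes "i < m"
  shows "{v. E i v} = (\<lambda>k. N + pcode i k) ` ({..<m} - {i})"
  using nbr[OF assms] adj1[OF assms] by auto

lemma inj_code:
  assumes "i < m"
  shows "inj_on (\<lambda>k. N + pcode i k) ({..<m} - {i})"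
proof
  fix k k' assume "k \<in> {..<m} - {i}" "k' \<in> {..<m} - {i}" "N + pcode i k = N + pcode i k'"
  then show "k = k'" using pcode_inj[of i k i k'] by auto
qed

lemma frac_bound:
  assumes "frac_guidance VV E 2 p"
  shows "frac_max_outdeg VV E p \<ge> (real m - 1) / 2"
proof -
  define f where "f i k = p i (N + pcode i k)" for i k
  have nonneg: "E u v \<Longrightarrow> p u v \<ge> 0" for u v
    using assms unfolding frac_guidance_def fractional_orientation_def by auto
  have sub: "(\<Sum>y\<in>Gamma E i k. p i y) \<le> f i k" if "i < m" "k < m" "i \<noteq> k" for i k
  proof -
    have S: "Gamma E i k = {} \<or> Gamma E i k = {N + pcode i k}"
      using Gamma_sub[OF that] by auto
    have "p i (N + pcode i k) \<ge> 0" using nonneg adj1[OF that] by simp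
    then show ?thesis using S unfolding f_def by auto
  qed
  have pair: "f i k + f k i \<ge> 1" if "i \<in> {..<m}" "k \<in> {..<m}" "i \<noteq> k" for i k
  proof -
    have "i \<in> VV" "k \<in> VV" using that mN by auto
    moreover have G: "\<And>u v l. u\<in>VV \<Longrightarrow> v\<in>VV \<Longrightarrow> at_dist E u v l \<Longrightarrow> 2 \<le> l \<Longrightarrow> l \<le> 2 \<Longrightarrow>
        (\<Sum>y\<in>Gamma E u v. p u y) + (\<Sum>y\<in>Gamma E v u. p v y) \<ge> 1"
      using assms unfolding frac_guidance_def by blast
    ultimately have "(\<Sum>y\<in>Gamma E i k. p i y) + (\<Sum>y\<in>Gamma E k i. p k y) \<ge> 1"
      using dist2[of i k] that by auto
    moreover have "(\<Sum>y\<in>Gamma E i k. p i y) \<le> f i k" using sub that by auto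
    moreover have "(\<Sum>y\<in>Gamma E k i. p k y) \<le> f k i" using sub that by auto
    ultimately show ?thesis by linarith
  qed
  obtain i where i: "i \<in> {..<m}" "(\<Sum>k\<in>{..<m}-{i}. f i k) \<ge> (real (card {..<m}) - 1) / 2"
    using avg[of "{..<m}" f] pair m2 by fastforce
  have im: "i < m" using i by simp
  have "(\<Sum>v\<in>{v. E i v}. p i v) = (\<Sum>k\<in>{..<m}-{i}. f i k)"
    unfolding out_set[OF im] f_def by (simp add: sum.reindex inj_code[OF im])
  moreover have "(\<Sum>v\<in>{v. E i v}. p i v) \<le> frac_max_outdeg VV E p"
    unfolding frac_max_outdeg_def using i(1) mN by (intro Max_ge) auto
  ultimately show ?thesis using i by simp
qed

lemma dball0: "dball H v 0 = {v}"
  unfolding dball_def by auto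

lemma dball1: "dball H v (Suc 0) = {v} \<union> {w. H v w}"
  unfolding dball_def by (auto simp: le_Suc_eq)

lemma weak_bound:
  assumes "weak_guidance VV E 2 H"
  shows "real (max_outdeg VV H) \<ge> (real m - 1) / 2"
proof -
  define f :: "nat \<Rightarrow> nat \<Rightarrow> real" where "f i k = (if H i (N + pcode i k) then 1 else 0)" for i k
  have HE: "H u v \<Longrightarrow> E u v" for u v
    using assms unfolding weak_guidance_def partial_orientation_def by auto
  have pair: "f i k + f k i \<ge> 1" if "i \<in> {..<m}" "k \<in> {..<m}" "i \<noteq> k" for i k
  proof -
    have im: "i < m" "k < m" using that by auto
    have "i \<in> VV" "k \<in> VV" using that mN by auto
    moreover have W: "\<And>u v l. u\<in>VV \<Longrightarrow> v\<in>VV \<Longrightarrow> u \<noteq> v \<Longrightarrow> at_dist E u v l \<Longrightarrow> l \<le> 2 \<Longrightarrow>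
        (\<exists>a b. a + b = l - 1 \<and> (\<exists>x\<in>dball H u a. \<exists>y\<in>dball H v b. E x y))"
      using assms unfolding weak_guidance_def by blast
    ultimately have "\<exists>a b. a + b = 2 - 1 \<and> (\<exists>x\<in>dball H i a. \<exists>y\<in>dball H k b. E x y)"
      using dist2[OF im that(3)] that(3) by blast
    then obtain a b where ab: "a + b = 1" and x: "\<exists>x\<in>dball H i a. \<exists>y\<in>dball H k b. E x y"
      by auto
    have "a = 0 \<and> b = Suc 0 \<or> a = Suc 0 \<and> b = 0" using ab by auto
    then have "H i (N + pcode i k) \<or> H k (N + pcode i k)"
    proof
      assume "a = 0 \<and> b = Suc 0"
      then obtain y where "E i y" "y = k \<or> H k y" using x by (auto simp: dball0 dball1)
      then have "E i y" "E k y" using HE nonadj[OF im] by auto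
      then have "y = N + pcode i k" using common[OF im that(3)] by simp
      then show ?thesis using \<open>y = k \<or> H k y\<close> \<open>E i y\<close> nonadj[OF im] by auto
    next
      assume "a = Suc 0 \<and> b = 0"
      then obtain y where "E y k" "y = i \<or> H i y" using x by (auto simp: dball0 dball1)
      then have "E i y" "E k y" using HE nonadj[OF im] Esym by auto
      then have "y = N + pcode i k" using common[OF im that(3)] by simp
      then show ?thesis using \<open>y = i \<or> H i y\<close> \<open>E y k\<close> nonadj[OF im] by auto
    qed
    then show ?thesis unfolding f_def by (auto simp: pcode_sym)
  qed
  obtain i where i: "i \<in> {..<m}" "(\<Sum>k\<in>{..<m}-{i}. f i k) \<ge> (real (card {..<m}) - 1) / 2"
    using avg[of "{..<m}" f] pair m2 by fastforce
  have im: "i < m" using i by simp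
  have fin: "finite {v. H i v}"
  proof (rule finite_subset)
    show "{v. H i v} \<subseteq> {v. E i v}" using HE by auto
    show "finite {v. E i v}" unfolding out_set[OF im] by simp
  qed
  have "(\<Sum>k\<in>{..<m}-{i}. f i k) = real (card {k\<in>{..<m}-{i}. H i (N + pcode i k)})"
    unfolding f_def by (simp add: sum.If_cases Int_def)
  also have "card {k\<in>{..<m}-{i}. H i (N + pcode i k)} = card ((\<lambda>k. N + pcode i k) ` {k\<in>{..<m}-{i}. H i (N + pcode i k)})"
    by (rule card_image[symmetric], rule inj_on_subset[OF inj_code[OF im]]) auto
  also have "\<dots> \<le> card {v. H i v}"
    by (rule card_mono[OF fin]) auto
  also have "card {v. H i v} \<le> max_outdeg VV H"
    unfolding max_outdeg_def using im mN by (intro Max_ge) auto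
  finally have "(\<Sum>k\<in>{..<m}-{i}. f i k) \<le> real (max_outdeg VV H)" by simp
  then show ?thesis using i by simp
qed

end

theorem lemma31:
  fixes n :: nat
  assumes "\<exists>q k. prime q \<and> k \<ge> 1 \<and> n = q ^ k"
  shows "\<exists>(V :: nat set) E. graph V E \<and> split_graph V E \<and> card V = 2 * (n^2 + n + 1)
     \<and> (\<forall>p. frac_guidance V E 2 p \<longrightarrow> frac_max_outdeg V E p \<ge> (real n + 1) / 2)
     \<and> (\<forall>H. weak_guidance V E 2 H \<longrightarrow> real (max_outdeg V H) \<ge> (real n + 1) / 2)"
proof -
  obtain q k where qk: "prime q" "n = q ^ k" using assms by blast
  have "q > 0" using qk(1) prime_gt_0_nat by blast
  then have n1: "n \<ge> 1" using qk(2) by simp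
  define m where "m = n + 2"
  define N where "N = n^2 + n + 1"
  have "2 * tri m = m * (m - 1)" by (rule tri_2)
  also have "\<dots> = (n+2)*(n+1)" unfolding m_def by simp
  also have "\<dots> \<le> 2 * N" unfolding N_def using n1
    by (simp add: power2_eq_square algebra_simps)
  finally have tN: "tri m \<le> N" by simp
  have mN: "m \<le> N" unfolding m_def N_def using n1 by (simp add: power2_eq_square)
  interpret gsetup m N using tN mN by unfold_locales (auto simp: m_def)
  have r: "(real m - 1) / 2 = (real n + 1) / 2" unfolding m_def by simp
  show ?thesis
    apply (rule exI[of _ VV], rule exI[of _ E])
    using is_graph is_split frac_bound weak_bound r unfolding N_def by auto
qed

end
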